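(* Let $H$ be the graph consisting of two vertex-disjoint triangles $v_1v_2v_3$ and $w_1w_2w_3$ together with the edge $v_3w_1$. Let $n\ge 7$ and let $G$ be a graph with $n$ vertices obtained from $H$ by attaching $n-6$ pendant edges (new leaves) to vertices of $H$, none of them to $v_3$ or $w_1$. Then $\operatorname{avm}(G)>\operatorname{avm}(T_n^1(3,3))$.
   Context: $\operatorname{avm}(G)$ is the average of $|M|$ over all maximal matchings $M$ of $G$ (a matching is maximal if not properly contained in another matching). $T_n^1(3,3)$ is the graph obtained from $H$ by attaching $n-6$ pendant edges (new leaves) to $v_3$. *)

theory Defs
  imports Complex_Main
begin

text \<open>Simple graphs given by their edge set; an edge is a 2-element set of vertices.\<close>

definition matching :: "'a set set \<Rightarrow> 'a set set \<Rightarrow> bool" where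
  "matching E M \<longleftrightarrow> M \<subseteq> E \<and> (\<forall>e\<in>M. \<forall>f\<in>M. e \<noteq> f \<longrightarrow> e \<inter> f = {})"

definition maximal_matching :: "'a set set \<Rightarrow> 'a set set \<Rightarrow> bool" where
  "maximal_matching E M \<longleftrightarrow> matching E M \<and> (\<forall>M'. matching E M' \<and> M \<subseteq> M' \<longrightarrow> M' = M)"

definition avm :: "'a set set \<Rightarrow> real" where
  "avm E = (\<Sum>M\<in>{M. maximal_matching E M}. real (card M)) / real (card {M. maximal_matching E M})"

text \<open>H: triangles v1v2v3 = 0,1,2 and w1w2w3 = 3,4,5, plus the edge v3w1 = {2,3}.\<close>
definition H_edges :: "nat set set" where
  "H_edges = {{0,1},{1,2},{0,2},{3,4},{4,5},{3,5},{2,3}}"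

definition pendant_graph :: "nat \<Rightarrow> (nat \<Rightarrow> nat) \<Rightarrow> nat set set" where
  "pendant_graph n a = H_edges \<union> (\<lambda>i. {i, a i}) ` {6..<n}"

text \<open>T_n^1(3,3): all n-6 leaves attached to v3 = vertex 2.\<close>
definition T1_33 :: "nat \<Rightarrow> nat set set" where
  "T1_33 n = pendant_graph n (\<lambda>_. 2)"

end

theory Submission
  imports Defs
begin

lemma maxm_iff:
  assumes "\<forall>e\<in>E. e \<noteq> {}"
  shows "maximal_matching E M \<longleftrightarrow> matching E M \<and> (\<forall>e\<in>E. e \<inter> \<Union>M \<noteq> {})"
proof
  assume mm: "maximal_matching E M"
  hence m: "matching E M" by (simp add: maximal_matching_def)
  have "e \<inter> \<Union>M \<noteq> {}" if "e \<in> E" for e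
  proof
    assume d: "e \<inter> \<Union>M = {}"
    have "e \<notin> M" using d assms that by blast
    have "matching E (insert e M)" using m d that unfolding matching_def by blast
    hence "insert e M = M" using mm unfolding maximal_matching_def by blast
    thus False using \<open>e \<notin> M\<close> by blast
  qed
  thus "matching E M \<and> (\<forall>e\<in>E. e \<inter> \<Union>M \<noteq> {})" using m by blast
next
  assume h: "matching E M \<and> (\<forall>e\<in>E. e \<inter> \<Union>M \<noteq> {})"
  show "maximal_matching E M" unfolding maximal_matching_def
  proof (intro conjI allI impI)
    show "matching E M" using h by blast
    fix M' assume M': "matching E M' \<and> M \<subseteq> M'"
    show "M' = M"
    proof (rule ccontr)
      assume "M' \<noteq> M"
      then obtain e where e: "e \<in> M'" "e \<notin> M" using M' by blast
      have "e \<in> E" using e M' unfolding matching_def by blast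
      then obtain f where f: "f \<in> M" "e \<inter> f \<noteq> {}" using h by blast
      have "f \<in> M'" using f M' by blast
      hence "e \<inter> f = {}" using M' e f unfolding matching_def by metis
      thus False using f by blast
    qed
  qed
qed

lemma extend_max:
  assumes "finite E" "matching E M0"
  shows "\<exists>M. maximal_matching E M \<and> M0 \<subseteq> M"
proof -
  let ?A = "{M. matching E M \<and> M0 \<subseteq> M}"
  have "?A \<subseteq> Pow E" unfolding matching_def by blast
  hence fin: "finite ?A" using assms(1) finite_subset by blast
  have "?A \<noteq> {}" using assms(2) by blast
  then obtain m where m: "m \<in> ?A" "\<forall>b\<in>?A. m \<le> b \<longrightarrow> m = b"
    using finite_has_maximal[OF fin] by blast
  have "maximal_matching E m" unfolding maximal_matching_def
  proof (intro conjI allI impI)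
    show "matching E m" using m by blast
    fix M' assume "matching E M' \<and> m \<subseteq> M'"
    thus "M' = m" using m by (metis (mono_tags, lifting) mem_Collect_eq order_trans)
  qed
  thus ?thesis using m by blast
qed

lemma fin_mm:
  assumes "finite E"
  shows "finite {M. maximal_matching E M}"
proof -
  have "{M. maximal_matching E M} \<subseteq> Pow E" unfolding maximal_matching_def matching_def by blast
  thus ?thesis using assms finite_subset by blast
qed

lemma pg_mem: "e \<in> pendant_graph n a \<longleftrightarrow> e \<in> H_edges \<or> (\<exists>i\<in>{6..<n}. e = {i, a i})"
  by (auto simp: pendant_graph_def)

lemma pg_fin: "finite (pendant_graph n a)"
  by (simp add: pendant_graph_def H_edges_def)

lemma pg_ne: "\<forall>e\<in>pendant_graph n a. e \<noteq> {}"
  by (auto simp: pendant_graph_def H_edges_def)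

lemma H_sub: "e \<in> H_edges \<Longrightarrow> e \<subseteq> {..<6}"
  by (auto simp: H_edges_def)


definition B0 :: "nat set set set" where
  "B0 = {{{0,2},{3,4}}, {{0,2},{4,5}}, {{0,2},{3,5}}, {{1,2},{3,4}}, {{1,2},{4,5}}, {{1,2},{3,5}}, {{2,3},{0,1},{4,5}}}"

lemma T_cover: "2 \<in> \<Union>M \<Longrightarrow> (\<forall>e\<in>H_edges. e \<inter> \<Union>M \<noteq> {}) \<Longrightarrow> \<forall>e\<in>T1_33 n. e \<inter> \<Union>M \<noteq> {}"
proof
  fix e assume "2 \<in> \<Union>M" "\<forall>e\<in>H_edges. e \<inter> \<Union>M \<noteq> {}" "e \<in> T1_33 n"
  then show "e \<inter> \<Union>M \<noteq> {}" unfolding T1_33_def pg_mem by auto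
qed

lemma B0_mm: "M \<in> B0 \<Longrightarrow> maximal_matching (T1_33 n) M"
proof -
  assume "M \<in> B0"
  hence sub: "M \<subseteq> H_edges" and dis: "\<forall>e\<in>M. \<forall>f\<in>M. e \<noteq> f \<longrightarrow> e \<inter> f = {}"
    and c2: "2 \<in> \<Union>M" and cov: "\<forall>e\<in>H_edges. e \<inter> \<Union>M \<noteq> {}"
    using \<open>M \<in> B0\<close> unfolding B0_def H_edges_def by (elim insertE emptyE; simp)+
  have "H_edges \<subseteq> T1_33 n" by (auto simp: T1_33_def pendant_graph_def)
  thus ?thesis unfolding maxm_iff[OF pg_ne[of n "\<lambda>_. 2", folded T1_33_def]] matching_def
    using sub dis T_cover[OF c2 cov] by blast
qed

lemma MT_cases:
  assumes "maximal_matching (T1_33 n) M" "n \<ge> 7"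
  shows "M \<in> B0 \<or> (\<exists>l\<in>{6..<n}. \<exists>e\<in>{{3,4},{4,5},{3,5}}. M = {{l,2},{0,1},e})"
proof -
  let ?E = "T1_33 n"
  have ME: "M \<subseteq> ?E" using assms(1) unfolding maximal_matching_def matching_def by blast
  have sub: "\<forall>f\<in>M. f \<in> H_edges \<or> (\<exists>i\<in>{6..<n}. f = {i,2})"
  proof
    fix f assume "f \<in> M"
    hence "f \<in> pendant_graph n (\<lambda>_. 2)" using ME by (auto simp: T1_33_def)
    thus "f \<in> H_edges \<or> (\<exists>i\<in>{6..<n}. f = {i,2})" by (simp add: pg_mem)
  qed
  have dis: "\<forall>e\<in>M. \<forall>f\<in>M. e \<noteq> f \<longrightarrow> e \<inter> f = {}"
    using assms(1) unfolding maximal_matching_def matching_def by blast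
  have cov: "\<forall>e\<in>?E. e \<inter> \<Union>M \<noteq> {}"
    using assms(1) unfolding T1_33_def maxm_iff[OF pg_ne] by blast
  have covH: "\<forall>e\<in>H_edges. e \<inter> \<Union>M \<noteq> {}" using cov by (auto simp: T1_33_def pendant_graph_def)
  have "{6,2} \<in> ?E" using assms(2) by (auto simp: T1_33_def pendant_graph_def)
  hence cov6: "{6,2} \<inter> \<Union>M \<noteq> {}" using cov by blast
  show ?thesis
  proof (cases "\<exists>l\<in>{6..<n}. {l,2} \<in> M")
    case True
    then obtain l where l: "l\<in>{6..<n}" "{l,2}\<in>M" by blast
    have sub2: "M \<subseteq> {{l,2},{0,1},{3,4},{4,5},{3,5}}"
    proof
      fix f assume f: "f \<in> M"
      show "f \<in> {{l,2},{0,1},{3,4},{4,5},{3,5}}"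
      proof (cases "f = {l,2}")
        case False
        have fd: "f \<inter> {l,2} = {}" using dis[rule_format, OF f l(2) False] .
        have "f \<in> H_edges"
        proof (rule ccontr)
          assume "f \<notin> H_edges"
          then obtain i where "f = {i,2}" using sub f by blast
          hence "2 \<in> f \<inter> {l,2}" by simp
          with fd show False by simp
        qed
        moreover have "l \<ge> 6" using l by simp
        ultimately show ?thesis using fd unfolding H_edges_def by auto
      qed simp
    qed
    have "{0,1} \<in> H_edges" by (simp add: H_edges_def)
    then obtain f where f: "f \<in> M" "f \<inter> {0,1} \<noteq> {}" using covH by blast
    have "f \<in> {{l,2},{0,1},{3,4},{4,5},{3,5}}" using subsetD[OF sub2 f(1)] .
    moreover have "l \<ge> 6" using l by simp
    ultimately have m01: "{0,1} \<in> M" using f by auto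
    have "{3,4} \<in> H_edges" by (simp add: H_edges_def)
    then obtain g where g: "g \<in> M" "g \<inter> {3,4} \<noteq> {}" using covH by blast
    have "g \<in> {{l,2},{0,1},{3,4},{4,5},{3,5}}" using subsetD[OF sub2 g(1)] .
    moreover have "l \<ge> 6" using l by simp
    ultimately have ge: "g \<in> {{3,4},{4,5},{3,5}}" using g by auto
    have "M = {{l,2},{0,1},g}"
    proof
      show "{{l,2},{0,1},g} \<subseteq> M" using l(2) m01 g(1) by simp
      show "M \<subseteq> {{l,2},{0,1},g}"
      proof
        fix h assume h: "h \<in> M"
        show "h \<in> {{l,2},{0,1},g}"
        proof (rule ccontr)
          assume nh: "h \<notin> {{l,2},{0,1},g}"
          have "h \<in> {{l,2},{0,1},{3,4},{4,5},{3,5}}" using subsetD[OF sub2 h] .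
          hence "h \<in> {{3,4},{4,5},{3,5}}" using nh by (elim insertE emptyE; simp)
          hence "h \<inter> g \<noteq> {}" using ge by (elim insertE emptyE; simp)
          moreover have "h \<noteq> g" using nh by simp
          ultimately show False using dis[rule_format, OF h g(1)] by simp
        qed
      qed
    qed
    thus ?thesis using l(1) ge by blast
  next
    case False
    have MH: "M \<subseteq> H_edges"
    proof
      fix f assume f: "f \<in> M"
      show "f \<in> H_edges"
      proof (rule ccontr)
        assume "f \<notin> H_edges"
        then obtain i where "i \<in> {6..<n}" "f = {i,2}" using sub f by blast
        thus False using False f by blast
      qed
    qed
    obtain x f where xf: "x \<in> {6,2}" "f \<in> M" "x \<in> f" using cov6 by blast
    have "f \<subseteq> {..<6}" using H_sub subsetD[OF MH xf(2)] by blast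
    hence "x = 2" using xf by auto
    hence f: "f \<in> M" "2 \<in> f" using xf by auto
    have "f \<in> H_edges" using subsetD[OF MH f(1)] .
    hence fc: "f \<in> {{0,2},{1,2},{2,3}}" using f(2) unfolding H_edges_def by (elim insertE emptyE; simp)
    have oth: "\<And>h. h \<in> M \<Longrightarrow> h \<noteq> f \<Longrightarrow> h \<in> H_edges \<and> h \<inter> f = {}"
      using dis f(1) MH by blast
    have "{0,1} \<in> H_edges" "{3,4} \<in> H_edges" "{4,5} \<in> H_edges" by (simp_all add: H_edges_def)
    hence c01: "{0,1} \<inter> \<Union>M \<noteq> {}" and c34: "{3,4} \<inter> \<Union>M \<noteq> {}" and c45: "{4,5} \<inter> \<Union>M \<noteq> {}"
      using covH by blast+
    show ?thesis
    proof (cases "f = {2,3}")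
      case True
      have "{0,1} \<in> M"
      proof -
        obtain h where h: "h \<in> M" "h \<inter> {0,1} \<noteq> {}" using c01 by blast
        have "h \<noteq> f" using h(2) True by auto
        hence "h \<in> H_edges" "h \<inter> {2,3} = {}" using oth[OF h(1)] True by auto
        hence "h = {0,1}" using h(2) unfolding H_edges_def by (elim insertE emptyE; simp)
        thus ?thesis using h(1) by simp
      qed
      moreover have "{4,5} \<in> M"
      proof -
        obtain h where h: "h \<in> M" "h \<inter> {4,5} \<noteq> {}" using c45 by blast
        have "h \<noteq> f" using h(2) True by auto
        hence "h \<in> H_edges" "h \<inter> {2,3} = {}" using oth[OF h(1)] True by auto
        hence "h = {4,5}" using h(2) unfolding H_edges_def by (elim insertE emptyE; simp)
        thus ?thesis using h(1) by simp
      qed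
      moreover have "M \<subseteq> {{2,3},{0,1},{4,5}}"
      proof
        fix h assume h: "h \<in> M"
        show "h \<in> {{2,3},{0,1},{4,5}}"
        proof (cases "h = f")
          case False
          hence "h \<in> H_edges" "h \<inter> {2,3} = {}" using oth[OF h] True by auto
          thus ?thesis unfolding H_edges_def by (elim insertE emptyE; simp)
        qed (simp add: True)
      qed
      ultimately have "M = {{2,3},{0,1},{4,5}}" using f(1) True by blast
      thus ?thesis by (simp add: B0_def)
    next
      case False
      hence f2: "f \<in> {{0,2},{1,2}}" using fc by blast
      obtain g where g: "g \<in> M" "g \<inter> {3,4} \<noteq> {}" using c34 by blast
      have "g \<noteq> f" using g(2) f2 by (elim insertE emptyE; auto)
      hence "g \<in> H_edges" "g \<inter> f = {}" using oth[OF g(1)] by auto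
      hence ge: "g \<in> {{3,4},{4,5},{3,5}}" using g(2) f2 unfolding H_edges_def by (elim insertE emptyE; simp)
      have "M \<subseteq> {f, g}"
      proof
        fix h assume h: "h \<in> M"
        show "h \<in> {f,g}"
        proof (rule ccontr)
          assume nh: "h \<notin> {f,g}"
          hence "h \<in> H_edges" "h \<inter> f = {}" using oth[OF h] by auto
          hence "h \<in> {{3,4},{4,5},{3,5}}" using f2 unfolding H_edges_def by (elim insertE emptyE; simp)
          hence "h \<inter> g \<noteq> {}" using ge by (elim insertE emptyE; simp)
          moreover have "h \<noteq> g" using nh by simp
          ultimately show False using dis[rule_format, OF h g(1)] by simp
        qed
      qed
      hence "M = {f,g}" using f(1) g(1) by blast
      thus ?thesis using f2 ge unfolding B0_def by (elim insertE emptyE; simp)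
    qed
  qed
qed

lemma B0_card: "card B0 = 7" unfolding B0_def by (simp add: card_insert_if doubleton_eq_iff insert_eq_iff)
lemma B0_sum: "(\<Sum>M\<in>B0. real (card M)) = 15" unfolding B0_def by (simp add: card_insert_if doubleton_eq_iff insert_eq_iff)

lemma B0_fin: "finite B0" unfolding B0_def by simp

lemma card3: "card {a,b,c} \<le> 3"
  by (simp add: card_insert_if)

lemma avmT:
  assumes "n \<ge> 7"
  shows "avm (T1_33 n) \<le> 3 - 6 / (3 * real (n - 6) + 7)"
proof -
  define MT where "MT = {M. maximal_matching (T1_33 n) M}"
  have fin: "finite MT" unfolding MT_def T1_33_def by (rule fin_mm[OF pg_fin])
  have B0s: "B0 \<subseteq> MT" unfolding MT_def using B0_mm by blast
  define R where "R = MT - B0"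
  define A0 where "A0 = (\<lambda>(l,e). {{l,2},{0,1},e}) ` ({6..<n} \<times> {{3,4},{4,5},{3,5::nat}})"
  have RA: "R \<subseteq> A0"
  proof
    fix M assume "M \<in> R"
    hence mm: "maximal_matching (T1_33 n) M" and nb: "M \<notin> B0" unfolding R_def MT_def by auto
    have "\<exists>l\<in>{6..<n}. \<exists>e\<in>{{3,4},{4,5},{3,5}}. M = {{l,2},{0,1},e}"
      using MT_cases[OF mm assms] nb by (elim disjE) simp_all
    then obtain l e where "l \<in> {6..<n}" "e \<in> {{3,4},{4,5},{3,5}}" "M = {{l,2},{0,1},e}"
      by (elim bexE)
    thus "M \<in> A0" unfolding A0_def by (intro image_eqI[where x="(l,e)"]) simp_all
  qed
  have "card A0 \<le> card ({6..<n} \<times> {{3,4},{4,5},{3,5::nat}})" unfolding A0_def by (rule card_image_le) simp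
  also have "\<dots> \<le> (n - 6) * 3" by (simp add: card_cartesian_product card_insert_if)
  finally have cA0: "card A0 \<le> (n-6)*3" .
  have finA0: "finite A0" unfolding A0_def by simp
  have cR: "card R \<le> 3 * (n-6)" using card_mono[OF finA0 RA] cA0 by simp
  have finR: "finite R" using fin R_def by simp
  have MTu: "MT = R \<union> B0" "R \<inter> B0 = {}" using B0s R_def by auto
  have cMT: "card MT = card R + 7" unfolding MTu(1) B0_card[symmetric]
    by (rule card_Un_disjoint[OF finR B0_fin MTu(2)])
  have sR: "(\<Sum>M\<in>R. real (card M)) \<le> (\<Sum>M\<in>R. 3)"
  proof (rule sum_mono)
    fix M assume "M \<in> R"
    hence "M \<in> A0" using RA by blast
    then obtain p where "p \<in> {6..<n} \<times> {{3,4},{4,5},{3,5::nat}}" "M = (\<lambda>(l,e). {{l,2},{0,1},e}) p"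
      unfolding A0_def by (rule imageE)
    then obtain l e where "M = {{l,2},{0,1},e}" by (cases p) simp
    thus "real (card M) \<le> 3" using card3 by (metis of_nat_le_iff of_nat_numeral)
  qed
  have sMT: "(\<Sum>M\<in>MT. real (card M)) = (\<Sum>M\<in>R. real (card M)) + 15"
    unfolding MTu(1) B0_sum[symmetric] by (rule sum.union_disjoint[OF finR B0_fin MTu(2)])
  have "avm (T1_33 n) = (\<Sum>M\<in>MT. real (card M)) / real (card MT)" unfolding avm_def MT_def ..
  also have "\<dots> \<le> (3 * real (card R) + 15) / (real (card R) + 7)"
    using sR sMT cMT by (simp add: divide_right_mono)
  also have "\<dots> = 3 - 6 / (real (card R) + 7)" by (simp add: field_simps)
  also have "\<dots> \<le> 3 - 6 / (3 * real (n - 6) + 7)"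
  proof -
    have "real (card R) \<le> 3 * real (n-6)" using cR by (metis of_nat_le_iff of_nat_mult of_nat_numeral)
    hence "6 / (3 * real (n - 6) + 7) \<le> 6 / (real (card R) + 7)" by (intro divide_left_mono) auto
    thus ?thesis by simp
  qed
  finally show ?thesis .
qed

definition Sall :: "nat set set set" where
  "Sall = {{{1,2},{4,5}},{{1,2},{3,5}},{{1,2},{3,4}},{{0,2},{4,5}},{{0,2},{3,5}},{{0,2},{3,4}},{{0,1},{3,5}},{{0,1},{3,4}}}"

lemma Sall_list: "Sall = set [{{1,2},{4,5}},{{1,2},{3,5}},{{1,2},{3,4}},{{0,2},{4,5}},{{0,2},{3,5}},{{0,2},{3,4}},{{0,1},{3,5}},{{0,1},{3,4}}]"
  unfolding Sall_def by simp

lemma H2a: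
  assumes "g1 \<in> H_edges" "g2 \<in> H_edges" "g1 \<inter> g2 = {} \<or> g1 = g2"
    "\<forall>e\<in>H_edges. e \<inter> (g1 \<union> g2) \<noteq> {}"
  shows "(g1, g2) \<in> {({1,2},{4,5}),({1,2},{3,5}),({1,2},{3,4}),({0,2},{4,5}),({0,2},{3,5}),({0,2},{3,4}),({0,1},{3,5}),({0,1},{3,4}),
     ({4,5},{1,2}),({3,5},{1,2}),({3,4},{1,2}),({4,5},{0,2}),({3,5},{0,2}),({3,4},{0,2}),({3,5},{0,1}),({3,4},{0,1})}"
proof -
  have c: "\<forall>e\<in>{{0,1},{1,2},{0,2},{3,4},{4,5},{3,5},{2,3::nat}}. e \<inter> (g1 \<union> g2) \<noteq> {}" using assms(4) unfolding H_edges_def .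
  have "g1 \<in> {{0,1},{1,2},{0,2},{3,4},{4,5},{3,5},{2,3}}" "g2 \<in> {{0,1},{1,2},{0,2},{3,4},{4,5},{3,5},{2,3}}" using assms(1,2) unfolding H_edges_def .
  thus ?thesis using c assms(3) by (elim insertE emptyE; simp)
qed

lemma H2:
  assumes "g1 \<in> H_edges" "g2 \<in> H_edges" "g1 \<inter> g2 = {} \<or> g1 = g2"
    "\<forall>e\<in>H_edges. e \<inter> (g1 \<union> g2) \<noteq> {}"
  shows "{g1,g2} \<in> Sall"
  using H2a[OF assms] unfolding Sall_def by (elim insertE emptyE; simp add: insert_commute)

lemma Sall_card: "M \<in> Sall \<Longrightarrow> card M = 2"
  unfolding Sall_def by (elim insertE emptyE; simp add: doubleton_eq_iff)

lemma S1_card: "p \<in> {0,1,4,5} \<Longrightarrow> card {M\<in>Sall. p \<in> \<Union>M} \<le> 5"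
proof -
  assume p: "p \<in> {0,1,4,5}"
  have "card {M\<in>Sall. p \<in> \<Union>M} \<le> length (filter (\<lambda>M. p \<in> \<Union>M) [{{1,2},{4,5}},{{1,2},{3,5}},{{1,2},{3,4}},{{0,2},{4,5}},{{0,2},{3,5}},{{0,2},{3,4}},{{0,1},{3,5}},{{0,1},{3,4::nat}}])"
    unfolding Sall_list by (metis card_length set_filter)
  also have "\<dots> \<le> 5" using p by (elim insertE emptyE; simp)
  finally show ?thesis .
qed

lemma S2_card: "p \<in> {0,1,4,5} \<Longrightarrow> q \<in> {0,1,4,5} \<Longrightarrow> p \<noteq> q \<Longrightarrow> card {M\<in>Sall. p \<in> \<Union>M \<and> q \<in> \<Union>M} \<le> 3"
proof -
  assume p: "p \<in> {0,1,4,5}" and q: "q \<in> {0,1,4,5}" and pq: "p \<noteq> q"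
  have "card {M\<in>Sall. p \<in> \<Union>M \<and> q \<in> \<Union>M} \<le> length (filter (\<lambda>M. p \<in> \<Union>M \<and> q \<in> \<Union>M) [{{1,2},{4,5}},{{1,2},{3,5}},{{1,2},{3,4}},{{0,2},{4,5}},{{0,2},{3,5}},{{0,2},{3,4}},{{0,1},{3,5}},{{0,1},{3,4::nat}}])"
    unfolding Sall_list by (metis card_length set_filter)
  also have "\<dots> \<le> 3" using p q pq by (elim insertE emptyE; simp)
  finally show ?thesis .
qed

lemma Hq1: "q \<in> {0,1,4,5} \<Longrightarrow> g \<in> H_edges \<Longrightarrow> \<exists>e\<in>H_edges. e \<inter> insert q g = {}"
  unfolding H_edges_def by (elim insertE emptyE; simp)

lemma Hq2: "q \<in> {0,1,4,5} \<Longrightarrow> q' \<in> {0,1,4,5} \<Longrightarrow> \<exists>e\<in>H_edges. e \<inter> {q,q'} = {}"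
  unfolding H_edges_def by (elim insertE emptyE; simp)

lemma two_elems:
  assumes "finite M" "M \<noteq> {}" "card M \<le> 2"
  shows "\<exists>g1 g2. g1 \<in> M \<and> g2 \<in> M \<and> M \<subseteq> {g1,g2}"
proof -
  obtain g1 where g1: "g1 \<in> M" using assms(2) by blast
  show ?thesis
  proof (cases "M - {g1} = {}")
    case True
    hence "M \<subseteq> {g1,g1}" by blast
    thus ?thesis using g1 by blast
  next
    case False
    then obtain g2 where g2: "g2 \<in> M - {g1}" by blast
    have "card (M - {g1}) \<le> Suc 0" using assms(1,3) g1 by (simp add: card_Diff_singleton)
    hence all: "\<forall>x\<in>M - {g1}. \<forall>y\<in>M - {g1}. x = y" by (metis card_le_Suc0_iff_eq assms(1) finite_Diff)
    have "M \<subseteq> {g1,g2}"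
    proof
      fix x assume x: "x \<in> M"
      show "x \<in> {g1,g2}"
      proof (cases "x = g1")
        case False
        hence "x \<in> M - {g1}" using x by simp
        hence "x = g2" using all g2 by blast
        thus ?thesis by simp
      qed simp
    qed
    thus ?thesis using g1 g2 by blast
  qed
qed

lemma noleaf:
  assumes "(i::nat) \<ge> 6" "q \<in> {0,1,4,5}"
    "g2 \<in> H_edges \<or> (\<exists>j\<ge>6. \<exists>q'\<in>{0,1,4,5}. g2 = {j,q'})"
    "\<forall>e\<in>H_edges. e \<inter> ({i,q} \<union> g2) \<noteq> {}"
  shows False
  using assms(3)
proof
  assume g2: "g2 \<in> H_edges"
  obtain e where e: "e \<in> H_edges" "e \<inter> insert q g2 = {}" using Hq1[OF assms(2) g2] by blast
  have "i \<notin> e" using H_sub[OF e(1)] assms(1) by auto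
  hence "e \<inter> ({i,q} \<union> g2) = {}" using e(2) by auto
  thus False using assms(4) e(1) by blast
next
  assume "\<exists>j\<ge>6. \<exists>q'\<in>{0,1,4,5}. g2 = {j,q'}"
  then obtain j q' where j: "j \<ge> 6" "q' \<in> {0,1,4,5}" "g2 = {j,q'}" by blast
  obtain e where e: "e \<in> H_edges" "e \<inter> {q,q'} = {}" using Hq2[OF assms(2) j(2)] by blast
  have "i \<notin> e" "j \<notin> e" using H_sub[OF e(1)] assms(1) j(1) by auto
  hence "e \<inter> ({i,q} \<union> g2) = {}" using e(2) j(3) by auto
  thus False using assms(4) e(1) by blast
qed

lemma edge_form:
  assumes aok: "\<forall>i\<in>{6..<n}. a i \<in> {0,1,4,5}" and "g \<in> pendant_graph n a"
  shows "g \<in> H_edges \<or> (\<exists>j\<ge>6. \<exists>q'\<in>{0,1,4,5}. g = {j,q'})"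
proof -
  have "g \<in> H_edges \<or> (\<exists>i\<in>{6..<n}. g = {i, a i})" using assms(2) by (simp add: pg_mem)
  thus ?thesis
  proof (elim disjE)
    assume "\<exists>i\<in>{6..<n}. g = {i, a i}"
    then obtain i where i: "i \<in> {6..<n}" "g = {i, a i}" by blast
    have "a i \<in> {0,1,4,5}" using aok i(1) by blast
    moreover have "i \<ge> 6" using i(1) by simp
    ultimately show ?thesis using i(2) by blast
  qed simp
qed

lemma G_small:
  assumes aok: "\<forall>i\<in>{6..<n}. a i \<in> {0,1,4,5}"
    and mm: "maximal_matching (pendant_graph n a) M" and c: "card M \<le> 2"
  shows "M \<in> Sall \<and> (\<forall>i\<in>{6..<n}. a i \<in> \<Union>M)"
proof -
  let ?E = "pendant_graph n a"
  have ME: "M \<subseteq> ?E" using mm unfolding maximal_matching_def matching_def by blast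
  have dis: "\<forall>e\<in>M. \<forall>f\<in>M. e \<noteq> f \<longrightarrow> e \<inter> f = {}"
    using mm unfolding maximal_matching_def matching_def by blast
  have cov: "\<forall>e\<in>?E. e \<inter> \<Union>M \<noteq> {}" using mm unfolding maxm_iff[OF pg_ne] by blast
  have HE: "H_edges \<subseteq> ?E" by (auto simp: pendant_graph_def)
  have covH: "\<forall>e\<in>H_edges. e \<inter> \<Union>M \<noteq> {}" using cov HE by blast
  have finM: "finite M" using finite_subset[OF ME pg_fin] .
  have "M \<noteq> {}"
  proof
    assume "M = {}"
    moreover have "{0,1} \<in> H_edges" by (simp add: H_edges_def)
    ultimately show False using covH by auto
  qed
  then obtain g1 g2 where g: "g1 \<in> M" "g2 \<in> M" "M \<subseteq> {g1,g2}" using two_elems[OF finM _ c] by blast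
  have Meq: "M = {g1,g2}" using g by blast
  have UM: "\<Union>M = g1 \<union> g2" using Meq by simp
  have f1: "g1 \<in> H_edges \<or> (\<exists>j\<ge>6. \<exists>q'\<in>{0,1,4,5}. g1 = {j,q'})" using edge_form[OF aok] ME g(1) by blast
  have f2: "g2 \<in> H_edges \<or> (\<exists>j\<ge>6. \<exists>q'\<in>{0,1,4,5}. g2 = {j,q'})" using edge_form[OF aok] ME g(2) by blast
  have cH: "\<forall>e\<in>H_edges. e \<inter> (g1 \<union> g2) \<noteq> {}" using covH UM by simp
  have h1: "g1 \<in> H_edges"
  proof (rule ccontr)
    assume "g1 \<notin> H_edges"
    then obtain j q where "j \<ge> 6" "q \<in> {0,1,4,5}" "g1 = {j,q}" using f1 by blast
    thus False using noleaf[OF _ _ f2] cH by blast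
  qed
  have h2: "g2 \<in> H_edges"
  proof (rule ccontr)
    assume "g2 \<notin> H_edges"
    then obtain j q where "j \<ge> 6" "q \<in> {0,1,4,5}" "g2 = {j,q}" using f2 by blast
    moreover have "\<forall>e\<in>H_edges. e \<inter> (g2 \<union> g1) \<noteq> {}" using cH by (simp add: Un_commute)
    ultimately show False using noleaf[OF _ _ f1] by blast
  qed
  have d: "g1 \<inter> g2 = {} \<or> g1 = g2" using dis g(1,2) by blast
  have S: "M \<in> Sall" using H2[OF h1 h2 d cH] Meq by simp
  have "\<forall>i\<in>{6..<n}. a i \<in> \<Union>M"
  proof
    fix i assume i: "i \<in> {6..<n}"
    have "{i, a i} \<in> ?E" using i by (auto simp: pendant_graph_def)
    hence "{i, a i} \<inter> \<Union>M \<noteq> {}" using cov by blast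
    hence "{i, a i} \<inter> (g1 \<union> g2) \<noteq> {}" using UM by simp
    moreover have "i \<notin> g1 \<union> g2" using H_sub[OF h1] H_sub[OF h2] i by auto
    ultimately show "a i \<in> \<Union>M" using UM by auto
  qed
  thus ?thesis using S by blast
qed

definition F1 :: "nat \<Rightarrow> nat set set set" where
  "F1 p = (if p = 0 then {{{1,2},{3,4}},{{1,2},{4,5}},{{1,2},{3,5}},{{2,3},{4,5}}}
     else if p = 1 then {{{0,2},{3,4}},{{0,2},{4,5}},{{0,2},{3,5}},{{2,3},{4,5}}}
     else if p = 4 then {{{3,5},{0,1}},{{3,5},{1,2}},{{3,5},{0,2}},{{2,3},{0,1}}}
     else {{{3,4},{0,1}},{{3,4},{1,2}},{{3,4},{0,2}},{{2,3},{0,1}}})"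

definition F2 :: "nat \<Rightarrow> nat set set set" where
  "F2 p = (if p = 0 then {{{1,2},{4,5}},{{1,2},{3,5}}}
     else if p = 1 then {{{0,2},{4,5}},{{0,2},{3,4}}}
     else if p = 4 then {{{0,1},{3,5}},{{0,2},{3,5}}}
     else {{{0,1},{3,4}},{{1,2},{3,4}}})"

definition cond :: "nat \<Rightarrow> nat set set \<Rightarrow> bool" where
  "cond p h \<longleftrightarrow> h \<subseteq> H_edges \<and> card h = 2 \<and> (\<forall>e\<in>h. \<forall>f\<in>h. e \<noteq> f \<longrightarrow> e \<inter> f = {}) \<and> p \<notin> \<Union>h
     \<and> (\<forall>e\<in>H_edges. e \<notin> h \<longrightarrow> e \<inter> insert p (\<Union>h) \<noteq> {})"

lemma F1_cond0: "p \<in> {0,1,4,5} \<Longrightarrow> \<forall>h\<in>F1 p. cond p h"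
  by (elim insertE emptyE; simp add: F1_def cond_def H_edges_def doubleton_eq_iff)

lemma F1_cond: "p \<in> {0,1,4,5} \<Longrightarrow> h \<in> F1 p \<Longrightarrow> cond p h"
  using F1_cond0 by blast

lemma F2_cond0: "p \<in> {0,1,4,5} \<Longrightarrow> \<forall>h\<in>F2 p. cond p h"
  by (elim insertE emptyE; simp add: F2_def cond_def H_edges_def doubleton_eq_iff)

lemma F2_cond: "p \<in> {0,1,4,5} \<Longrightarrow> h \<in> F2 p \<Longrightarrow> cond p h"
  using F2_cond0 by blast

lemma F1_card: "p \<in> {0,1,4,5} \<Longrightarrow> card (F1 p) = 4"
  by (elim insertE emptyE; simp add: F1_def card_insert_if doubleton_eq_iff insert_eq_iff)

lemma F2_card: "p \<in> {0,1,4,5} \<Longrightarrow> card (F2 p) = 2"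
  by (elim insertE emptyE; simp add: F2_def card_insert_if doubleton_eq_iff insert_eq_iff)

lemma F_fin: "finite (F1 p)" "finite (F2 p)"
  by (simp_all add: F1_def F2_def)

definition own :: "nat set set \<Rightarrow> nat" where
  "own h = (if 0 \<notin> \<Union>h \<and> 5 \<in> \<Union>h then 0 else if 1 \<notin> \<Union>h \<and> 4 \<in> \<Union>h then 1 else if 4 \<notin> \<Union>h then 4 else 5)"

lemma F2_own: "p \<in> {0,1,4,5} \<Longrightarrow> \<forall>h\<in>F2 p. own h = p"
  by (elim insertE emptyE; simp add: F2_def own_def)

lemma F2_inj: "p \<in> {0,1,4,5} \<Longrightarrow> q \<in> {0,1,4,5} \<Longrightarrow> h \<in> F2 p \<Longrightarrow> h \<in> F2 q \<Longrightarrow> p = q"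
  using F2_own by metis

lemma X_lower:
  fixes F :: "nat \<Rightarrow> nat set set set"
  assumes aok: "\<forall>i\<in>{6..<n}. a i \<in> {0,1,4,5}"
  and Fok: "\<And>i h. i \<in> {6..<n} \<Longrightarrow> h \<in> F (a i) \<Longrightarrow> h \<subseteq> H_edges \<and> card h = 2 \<and>
      (\<forall>e\<in>h. \<forall>f\<in>h. e \<noteq> f \<longrightarrow> e \<inter> f = {}) \<and> a i \<notin> \<Union>h \<and>
      (\<forall>e\<in>H_edges. e \<notin> h \<longrightarrow> e \<inter> insert (a i) (\<Union>h) \<noteq> {})"
  and Finj: "\<And>i j h. i \<in> {6..<n} \<Longrightarrow> j \<in> {6..<n} \<Longrightarrow> h \<in> F (a i) \<Longrightarrow> h \<in> F (a j) \<Longrightarrow> a i = a j"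
  and finF: "\<And>p. finite (F p)"
  shows "card (SIGMA i:{6..<n}. F (a i)) \<le> card {M. maximal_matching (pendant_graph n a) M \<and> card M \<ge> 3}"
proof -
  let ?E = "pendant_graph n a"
  let ?S = "SIGMA i:{6..<n}. F (a i)"
  define f where "f = (\<lambda>(i,h). SOME M. maximal_matching ?E M \<and> insert {i, a i} h \<subseteq> M)"
  have HE: "H_edges \<subseteq> ?E" by (auto simp: pendant_graph_def)
  have P: "maximal_matching ?E (f (i,h)) \<and> insert {i, a i} h \<subseteq> f (i,h)"
    and Hp: "f (i,h) \<inter> H_edges = h" and c3: "card (f (i,h)) \<ge> 3"
    if ih: "(i,h) \<in> ?S" for i h
  proof -
    have i: "i \<in> {6..<n}" and h: "h \<in> F (a i)" using ih by auto
    note hp = Fok[OF i h]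
    have ai: "a i \<in> {0,1,4,5}" using aok i by blast
    have i6: "i \<ge> 6" using i by simp
    have ie: "{i, a i} \<in> ?E" using i by (auto simp: pendant_graph_def)
    have hsub: "h \<subseteq> H_edges" using hp by blast
    have i_notin: "\<And>e. e \<in> h \<Longrightarrow> i \<notin> e" using hsub H_sub i6 by fastforce
    have disj_leaf: "\<And>e. e \<in> h \<Longrightarrow> e \<inter> {i, a i} = {}"
    proof -
      fix e assume e: "e \<in> h"
      have "a i \<notin> e" using hp e by blast
      thus "e \<inter> {i, a i} = {}" using i_notin[OF e] by blast
    qed
    have nin: "{i, a i} \<notin> h" using i_notin by blast
    have m0: "matching ?E (insert {i, a i} h)"
      unfolding matching_def
    proof (intro conjI ballI impI)
      show "insert {i, a i} h \<subseteq> ?E" using ie hsub HE by blast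
      fix e g assume e: "e \<in> insert {i, a i} h" and g: "g \<in> insert {i, a i} h" and eg: "e \<noteq> g"
      show "e \<inter> g = {}"
      proof (cases "e = {i, a i}")
        case True
        hence "g \<in> h" using g eg by blast
        thus ?thesis using disj_leaf True by blast
      next
        case False
        hence e': "e \<in> h" using e by blast
        show ?thesis
        proof (cases "g = {i, a i}")
          case True
          thus ?thesis using disj_leaf[OF e'] by simp
        next
          case False
          hence "g \<in> h" using g by blast
          thus ?thesis using hp e' eg by blast
        qed
      qed
    qed
    have ex: "\<exists>M. maximal_matching ?E M \<and> insert {i, a i} h \<subseteq> M" using extend_max[OF pg_fin m0] .
    show P: "maximal_matching ?E (f (i,h)) \<and> insert {i, a i} h \<subseteq> f (i,h)"
      unfolding f_def using someI_ex[OF ex] by simp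
    let ?M = "f (i,h)"
    have dis: "\<forall>e\<in>?M. \<forall>g\<in>?M. e \<noteq> g \<longrightarrow> e \<inter> g = {}" using P unfolding maximal_matching_def matching_def by blast
    show "?M \<inter> H_edges = h"
    proof
      show "h \<subseteq> ?M \<inter> H_edges" using P hsub by blast
      show "?M \<inter> H_edges \<subseteq> h"
      proof
        fix e assume e: "e \<in> ?M \<inter> H_edges"
        show "e \<in> h"
        proof (rule ccontr)
          assume ne: "e \<notin> h"
          have "e \<inter> insert (a i) (\<Union>h) \<noteq> {}" using hp e ne by blast
          then obtain x where x: "x \<in> e" "x = a i \<or> x \<in> \<Union>h" by blast
          from x(2) show False
          proof
            assume xa: "x = a i"
            have "i \<notin> e" using H_sub e i6 by fastforce
            hence "e \<noteq> {i, a i}" by blast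
            moreover have "{i, a i} \<in> ?M" using P by blast
            moreover have "e \<in> ?M" using e by blast
            ultimately have "e \<inter> {i, a i} = {}" using dis by (meson)
            thus False using x(1) xa by blast
          next
            assume "x \<in> \<Union>h"
            then obtain g where g: "g \<in> h" "x \<in> g" by blast
            have "g \<in> ?M" using P g(1) by blast
            moreover have "e \<noteq> g" using ne g(1) by metis
            moreover have "e \<in> ?M" using e by blast
            ultimately have "e \<inter> g = {}" using dis by (meson)
            thus False using x(1) g(2) by blast
          qed
        qed
      qed
    qed
    have finh: "finite h" using hp by (metis card.infinite zero_neq_numeral)
    have "card (insert {i, a i} h) = 3" using hp finh nin by simp
    moreover have "?M \<subseteq> ?E" using P unfolding maximal_matching_def matching_def by blast
    hence "finite ?M" using finite_subset pg_fin by metis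
    ultimately show "card ?M \<ge> 3" using P card_mono by metis
  qed
  have inj: "inj_on f ?S"
  proof (rule inj_onI)
    fix x y assume x: "x \<in> ?S" and y: "y \<in> ?S" and fxy: "f x = f y"
    obtain i h where xi: "x = (i,h)" by (cases x)
    obtain j h' where yj: "y = (j,h')" by (cases y)
    have hh: "h = h'" using Hp[of i h] Hp[of j h'] x y xi yj fxy by simp
    have i: "i \<in> {6..<n}" "h \<in> F (a i)" using x xi by auto
    have j: "j \<in> {6..<n}" "h \<in> F (a j)" using y yj hh by auto
    have aij: "a i = a j" using Finj[OF i(1) j(1) i(2) j(2)] .
    let ?M = "f (i,h)"
    have m1: "{i, a i} \<in> ?M" using P[of i h] x xi by blast
    have "f (j,h) = ?M" using fxy xi yj hh by simp
    moreover have "{j, a j} \<in> f (j,h)" using P[of j h] y yj hh by blast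
    ultimately have m2: "{j, a i} \<in> ?M" using aij by simp
    have dis: "\<forall>e\<in>?M. \<forall>g\<in>?M. e \<noteq> g \<longrightarrow> e \<inter> g = {}"
      using P[of i h] x xi unfolding maximal_matching_def matching_def by blast
    have eq: "{i, a i} = {j, a i}"
    proof (rule ccontr)
      assume ne: "{i, a i} \<noteq> {j, a i}"
      have "{i, a i} \<inter> {j, a i} = {}" using dis m1 m2 ne by meson
      thus False by simp
    qed
    have "a i \<in> {0,1,4,5}" using aok i(1) by blast
    hence "i \<noteq> a i" "j \<noteq> a i" using i(1) j(1) by auto
    hence "i = j" using eq by (auto simp: doubleton_eq_iff)
    thus "x = y" using xi yj hh by simp
  qed
  have img: "f ` ?S \<subseteq> {M. maximal_matching ?E M \<and> card M \<ge> 3}"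
    using P c3 by auto
  have fin: "finite {M. maximal_matching ?E M \<and> card M \<ge> 3}"
    using fin_mm[OF pg_fin, of n a] by (rule finite_subset[rotated]) auto
  show ?thesis using card_inj_on_le[OF inj img fin] .
qed

lemma final_arith:
  fixes a b K :: real
  assumes "a \<ge> 0" "b > 0" "K \<ge> 0" "a * (3*K+1) < 6*b"
  shows "3 - 6 / (3*K+7) < (2*a+3*b)/(a+b)"
proof -
  have p1: "a + b > 0" using assms by simp
  have p2: "3*K+7 > 0" using assms by simp
  have "(3 - 6 / (3*K+7)) * ((a+b)*(3*K+7)) = 3*(a+b)*(3*K+7) - 6*(a+b)" using p2 by (simp add: field_simps)
  also have "\<dots> < (2*a+3*b)*(3*K+7)" using assms(4) by (simp add: algebra_simps)
  also have "\<dots> = (2*a+3*b)/(a+b) * ((a+b)*(3*K+7))" using p1 by (simp add: field_simps)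
  finally have "(3 - 6 / (3*K+7)) * (a+b) < 2*a+3*b" using p1 p2 by (simp add: mult_less_cancel_right)
  thus ?thesis using p1 by (simp add: pos_less_divide_eq)
qed

theorem lemma4p2:
  fixes n :: nat and a :: "nat \<Rightarrow> nat"
  assumes "n \<ge> 7"
    and "\<forall>i\<in>{6..<n}. a i \<in> {0, 1, 4, 5}"
  shows "avm (pendant_graph n a) > avm (T1_33 n)"
proof -
  note aok = assms(2)
  let ?E = "pendant_graph n a"
  define MM where "MM = {M. maximal_matching ?E M}"
  define N2 where "N2 = {M \<in> MM. card M \<le> 2}"
  define Xs where "Xs = {M. maximal_matching ?E M \<and> card M \<ge> 3}"
  define k where "k = n - 6"
  have k1: "k \<ge> 1" using assms(1) k_def by simp
  have finMM: "finite MM" unfolding MM_def by (rule fin_mm[OF pg_fin])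
  have MMu: "MM = N2 \<union> Xs" unfolding MM_def N2_def Xs_def by auto
  have MMd: "N2 \<inter> Xs = {}" unfolding N2_def Xs_def by auto
  have finN2: "finite N2" using finMM MMu by simp
  have finXs: "finite Xs" using finMM MMu by simp
  have N2c: "\<And>M. M \<in> N2 \<Longrightarrow> M \<in> Sall \<and> (\<forall>i\<in>{6..<n}. a i \<in> \<Union>M)"
    unfolding N2_def MM_def using G_small[OF aok] by blast
  have six: "6 \<in> {6..<n}" using assms(1) by simp
  have p: "a 6 \<in> {0,1,4,5}" using aok six by blast
  have key: "real (card N2) * (3 * real k + 1) < 6 * real (card Xs)"
  proof (cases "\<forall>i\<in>{6..<n}. a i = a 6")
    case True
    have "N2 \<subseteq> {M\<in>Sall. a 6 \<in> \<Union>M}" using N2c six by blast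
    hence "card N2 \<le> card {M\<in>Sall. a 6 \<in> \<Union>M}" by (rule card_mono[rotated]) (simp add: Sall_def)
    hence cN2: "card N2 \<le> 5" using S1_card[OF p] by linarith
    have "card (SIGMA i:{6..<n}. F1 (a i)) \<le> card Xs" unfolding Xs_def
    proof (rule X_lower[OF aok])
      fix i h assume i: "i \<in> {6..<n}" and h: "h \<in> F1 (a i)"
      have "a i \<in> {0,1,4,5}" using aok i by blast
      hence "cond (a i) h" using F1_cond h by blast
      thus "h \<subseteq> H_edges \<and> card h = 2 \<and> (\<forall>e\<in>h. \<forall>f\<in>h. e \<noteq> f \<longrightarrow> e \<inter> f = {}) \<and> a i \<notin> \<Union>h \<and>
      (\<forall>e\<in>H_edges. e \<notin> h \<longrightarrow> e \<inter> insert (a i) (\<Union>h) \<noteq> {})"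
        unfolding cond_def .
    next
      fix i j h assume "i \<in> {6..<n}" "j \<in> {6..<n}"
      hence "a i = a 6" "a j = a 6" using True by blast+
      thus "a i = a j" by (rule trans[OF _ sym])
    qed (rule F_fin)
    moreover have "card (SIGMA i:{6..<n}. F1 (a i)) = 4 * k"
    proof -
      have "card (SIGMA i:{6..<n}. F1 (a i)) = (\<Sum>i\<in>{6..<n}. card (F1 (a i)))"
        by (rule card_SigmaI) (simp_all add: F_fin)
      also have "\<dots> = (\<Sum>i\<in>{6..<n}. 4)" using F1_card aok by (intro sum.cong) auto
      finally show ?thesis by (simp add: k_def)
    qed
    ultimately have cX: "4 * k \<le> card Xs" by simp
    have "real (card N2) * (3 * real k + 1) \<le> 5 * (3 * real k + 1)"
      using cN2 by (intro mult_right_mono) auto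
    also have "\<dots> < 6 * (4 * real k)" using k1 by simp
    also have "\<dots> \<le> 6 * real (card Xs)" using cX by simp
    finally show ?thesis .
  next
    case False
    then obtain j where j: "j \<in> {6..<n}" "a j \<noteq> a 6" by blast
    have q: "a j \<in> {0,1,4,5}" using aok j(1) by blast
    have "N2 \<subseteq> {M\<in>Sall. a 6 \<in> \<Union>M \<and> a j \<in> \<Union>M}" using N2c six j(1) by blast
    hence "card N2 \<le> card {M\<in>Sall. a 6 \<in> \<Union>M \<and> a j \<in> \<Union>M}" by (rule card_mono[rotated]) (simp add: Sall_def)
    hence cN2: "card N2 \<le> 3" using S2_card[OF p q] j(2) by fastforce
    have "j \<noteq> 6" using j(2) by auto
    hence k2: "k \<ge> 2" using j(1) k_def by auto
    have "card (SIGMA i:{6..<n}. F2 (a i)) \<le> card Xs" unfolding Xs_def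
    proof (rule X_lower[OF aok])
      fix i h assume i: "i \<in> {6..<n}" and h: "h \<in> F2 (a i)"
      have "a i \<in> {0,1,4,5}" using aok i by blast
      hence "cond (a i) h" using F2_cond h by blast
      thus "h \<subseteq> H_edges \<and> card h = 2 \<and> (\<forall>e\<in>h. \<forall>f\<in>h. e \<noteq> f \<longrightarrow> e \<inter> f = {}) \<and> a i \<notin> \<Union>h \<and>
      (\<forall>e\<in>H_edges. e \<notin> h \<longrightarrow> e \<inter> insert (a i) (\<Union>h) \<noteq> {})"
        unfolding cond_def .
    next
      fix i j h assume "i \<in> {6..<n}" "j \<in> {6..<n}" "h \<in> F2 (a i)" "h \<in> F2 (a j)"
      thus "a i = a j" using F2_inj aok by blast
    qed (rule F_fin)
    moreover have "card (SIGMA i:{6..<n}. F2 (a i)) = 2 * k"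
    proof -
      have "card (SIGMA i:{6..<n}. F2 (a i)) = (\<Sum>i\<in>{6..<n}. card (F2 (a i)))"
        by (rule card_SigmaI) (simp_all add: F_fin)
      also have "\<dots> = (\<Sum>i\<in>{6..<n}. 2)" using F2_card aok by (intro sum.cong) auto
      finally show ?thesis by (simp add: k_def)
    qed
    ultimately have cX: "2 * k \<le> card Xs" by simp
    have "real (card N2) * (3 * real k + 1) \<le> 3 * (3 * real k + 1)"
      using cN2 by (intro mult_right_mono) auto
    also have "\<dots> < 6 * (2 * real k)" using k2 by simp
    also have "\<dots> \<le> 6 * real (card Xs)" using cX by simp
    finally show ?thesis .
  qed
  have Xpos: "card Xs > 0"
  proof -
    have "real (card N2) * (3 * real k + 1) \<ge> 0" by simp
    hence "0 < 6 * real (card Xs)" using key by linarith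
    thus ?thesis by simp
  qed
  have sN2: "(\<Sum>M\<in>N2. real (card M)) = 2 * real (card N2)"
  proof -
    have "(\<Sum>M\<in>N2. real (card M)) = (\<Sum>M\<in>N2. 2)"
      using N2c Sall_card by (intro sum.cong) auto
    thus ?thesis by simp
  qed
  have sXs: "(\<Sum>M\<in>Xs. real (card M)) \<ge> 3 * real (card Xs)"
  proof -
    have "(\<Sum>M\<in>Xs. real (card M)) \<ge> (\<Sum>M\<in>Xs. 3)"
      unfolding Xs_def by (intro sum_mono) auto
    thus ?thesis by simp
  qed
  have sMM: "(\<Sum>M\<in>MM. real (card M)) = (\<Sum>M\<in>N2. real (card M)) + (\<Sum>M\<in>Xs. real (card M))"
    unfolding MMu by (rule sum.union_disjoint[OF finN2 finXs MMd])
  have cMM: "card MM = card N2 + card Xs"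
    unfolding MMu by (rule card_Un_disjoint[OF finN2 finXs MMd])
  have "avm (T1_33 n) \<le> 3 - 6 / (3 * real (n - 6) + 7)" by (rule avmT[OF assms(1)])
  also have "\<dots> = 3 - 6 / (3 * real k + 7)" by (simp add: k_def)
  also have "\<dots> < (2 * real (card N2) + 3 * real (card Xs)) / (real (card N2) + real (card Xs))"
    by (rule final_arith) (use key Xpos in auto)
  also have "\<dots> \<le> (\<Sum>M\<in>MM. real (card M)) / real (card MM)"
  proof -
    have r: "real (card MM) = real (card N2) + real (card Xs)" using cMM by simp
    have "2 * real (card N2) + 3 * real (card Xs) \<le> (\<Sum>M\<in>MM. real (card M))" using sN2 sXs sMM by linarith
    thus ?thesis unfolding r by (rule divide_right_mono) simp
  qed
  also have "\<dots> = avm ?E" unfolding avm_def MM_def ..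
  finally show ?thesis .
qed

end
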